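(* Let $x,y\in\mathbb{B}^2\setminus\{0\}$ be such that $0,x,y$ are noncollinear. Let $t_x=\sqrt{\frac{1}{|x|^2}-1}$ and $t_y=\sqrt{\frac{1}{|y|^2}-1}$, so that $0$ is the inversion of $x$ in the circle $S^1(x^*,t_x)$ and the inversion of $y$ in the circle $S^1(y^*,t_y)$. Then $S^1(x^*,t_x)$ is orthogonal to $S^1(y^*,t_y)$ if and only if $\cos\angle x0y=|x||y|$.
   Context: $\mathbb{B}^2$ is the unit disk; $S^1(c,r)$ the circle with centre $c$ and radius $r$; $x^*=x/|x|^2$; $\angle x0y$ is the angle at $0$ between the segments $[0,x]$ and $[0,y]$. *)

theory Defs
  imports "HOL-Analysis.Analysis"
begin

definition inv_pt :: "real^2 \<Rightarrow> real^2" where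
  "inv_pt x = (1 / (norm x)^2) *\<^sub>R x"

definition angle0 :: "real^2 \<Rightarrow> real^2 \<Rightarrow> real" where
  "angle0 x y = arccos ((x \<bullet> y) / (norm x * norm y))"

definition circle :: "real^2 \<Rightarrow> real \<Rightarrow> (real^2) set" where
  "circle c r = sphere c r"

definition circles_orthogonal :: "real^2 \<Rightarrow> real \<Rightarrow> real^2 \<Rightarrow> real \<Rightarrow> bool" where
  "circles_orthogonal a r b s \<longleftrightarrow> 0 < r \<and> 0 < s \<and>
     (\<exists>z \<in> circle a r \<inter> circle b s. (z - a) \<bullet> (z - b) = 0)"

end

theory Submission
  imports Defs
begin

lemma inner2: "(u::real^2) \<bullet> v = u$1 * v$1 + u$2 * v$2"
  by (simp add: inner_vec_def sum_2)

lemma alg: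
  fixes p q r s D :: real
  assumes "D = p^2+q^2" "D = r^2+s^2" "D > 0"
  shows "(r/D*(r*p - s*q))^2 + (r/D*(r*q+s*p))^2 = r^2"
    "(r/D*(r*p - s*q) - p)^2 + (r/D*(r*q+s*p) - q)^2 = s^2"
    "(r/D*(r*p - s*q))*(r/D*(r*p - s*q) - p) + (r/D*(r*q+s*p))*(r/D*(r*q+s*p) - q) = 0"
proof -
  have e0: "(r*p - s*q)^2 + (r*q+s*p)^2 = (r^2+s^2)*(p^2+q^2)" by (simp add: power2_eq_square algebra_simps)
  have e: "(r*p - s*q)^2 + (r*q+s*p)^2 = D*D" using assms(1,2) e0 by simp
  have "(r/D*(r*p - s*q))^2 + (r/D*(r*q+s*p))^2 = (r/D)^2 * ((r*p - s*q)^2 + (r*q+s*p)^2)"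
    by (simp only: power_mult_distrib distrib_left[symmetric])
  also have "\<dots> = r^2" using e assms(3) by (simp add: power2_eq_square)
  finally show "(r/D*(r*p - s*q))^2 + (r/D*(r*q+s*p))^2 = r^2" .
  have e2a: "r/D*(r*p - s*q) - p = (r*(r*p - s*q) - p*D)/D" using assms(3) by (simp add: field_simps)
  have e2b: "r*(r*p - s*q) - p*D = -(s^2)*p - r* s*q" using assms(2) by (simp add: algebra_simps power2_eq_square)
  have e2: "r/D*(r*p - s*q) - p = (-(s^2)*p - r* s*q)/D" using e2a e2b by simp
  have e3a: "r/D*(r*q + s*p) - q = (r*(r*q + s*p) - q*D)/D" using assms(3) by (simp add: field_simps)
  have e3b: "r*(r*q + s*p) - q*D = -(s^2)*q + r* s*p" using assms(2) by (simp add: algebra_simps power2_eq_square)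
  have e3: "r/D*(r*q + s*p) - q = (-(s^2)*q + r* s*p)/D" using e3a e3b by simp
  have e40: "(-(s^2)*p - r* s*q)^2 + (-(s^2)*q + r* s*p)^2 = s^2 * (r^2+s^2)*(p^2+q^2)" by (simp add: power2_eq_square algebra_simps)
  have e4: "(-(s^2)*p - r* s*q)^2 + (-(s^2)*q + r* s*p)^2 = s^2 * D * D" using assms(1,2) e40 by simp
  show "(r/D*(r*p - s*q) - p)^2 + (r/D*(r*q+s*p) - q)^2 = s^2"
    unfolding e2 e3 using e4 assms(3) by (simp add: power_divide add_divide_distrib[symmetric] power2_eq_square)
  have e5: "(r*p - s*q)*(-(s^2)*p - r* s*q) + (r*q+s*p)*(-(s^2)*q + r* s*p) = 0" by (simp add: algebra_simps power2_eq_square)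
  have "(r/D*(r*p - s*q))*((-(s^2)*p - r* s*q)/D) + (r/D*(r*q+s*p))*((-(s^2)*q + r* s*p)/D)
     = r/D/D * ((r*p - s*q)*(-(s^2)*p - r* s*q) + (r*q+s*p)*(-(s^2)*q + r* s*p))"
    using assms(3) by (simp add: field_simps)
  then show "(r/D*(r*p - s*q))*(r/D*(r*p - s*q) - p) + (r/D*(r*q+s*p))*(r/D*(r*q+s*p) - q) = 0"
    unfolding e2 e3 e5 by simp
qed

lemma exists_orth:
  fixes a b :: "real^2"
  assumes r: "r > 0" and s: "s > 0" and h: "(norm (a - b))^2 = r^2 + s^2"
  shows "\<exists>z \<in> sphere a r \<inter> sphere b s. (z - a) \<bullet> (z - b) = 0"
proof -
  define d where "d = b - a"
  define e :: "real^2" where "e = vector [-(d$2), d$1]"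
  define D where "D = d$1^2 + d$2^2"
  have nd: "(norm d)^2 = D" unfolding D_def power2_norm_eq_inner inner2 by (simp add: power2_eq_square)
  have D: "D = r^2 + s^2" using h nd unfolding d_def by (simp add: norm_minus_commute)
  have Dp: "D > 0" using D r s by (simp add: add_pos_pos)
  define z where "z = a + (r / D) *\<^sub>R (r *\<^sub>R d + s *\<^sub>R e)"
  have e1: "e$1 = -(d$2)" and e2: "e$2 = d$1" by (simp_all add: e_def)
  have za1: "(z - a)$1 = r/D * (r*d$1 - s*d$2)" and za2: "(z-a)$2 = r/D*(r*d$2 + s*d$1)"
    by (simp_all add: z_def e1 e2 algebra_simps)
  have zb1: "(z - b)$1 = (z-a)$1 - d$1" and zb2: "(z - b)$2 = (z-a)$2 - d$2"
    by (simp_all add: d_def)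
  note A = alg[of D "d$1" "d$2" r s, OF D_def[unfolded] D Dp]
  have c1: "(norm (z - a))^2 = ((z-a)$1)^2 + ((z-a)$2)^2"
    unfolding power2_norm_eq_inner inner2 by (simp add: power2_eq_square)
  have n1: "(norm (z - a))^2 = r^2"
    unfolding c1 za1 za2 by (rule A(1))
  have c2: "(norm (z - b))^2 = ((z-b)$1)^2 + ((z-b)$2)^2"
    unfolding power2_norm_eq_inner inner2 by (simp add: power2_eq_square)
  have n2: "(norm (z - b))^2 = s^2"
    unfolding c2 zb1 zb2 za1 za2 by (rule A(2))
  have o: "(z - a) \<bullet> (z - b) = 0"
    unfolding inner2 zb1 zb2 za1 za2 by (rule A(3))
  have "norm (z - a) = r" using n1 r by (metis norm_ge_zero power2_eq_imp_eq less_imp_le)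
  moreover have "norm (z - b) = s" using n2 s by (metis norm_ge_zero power2_eq_imp_eq less_imp_le)
  ultimately show ?thesis using o by (auto simp: dist_norm norm_minus_commute intro!: bexI[of _ z])
qed

lemma orth_iff:
  fixes a b :: "real^2"
  assumes r: "r > 0" and s: "s > 0"
  shows "circles_orthogonal a r b s \<longleftrightarrow> (norm (a - b))^2 = r^2 + s^2"
proof
  assume "circles_orthogonal a r b s"
  then obtain z where z0: "z \<in> sphere a r" "z \<in> sphere b s" "(z - a) \<bullet> (z - b) = 0"
    by (auto simp: circles_orthogonal_def circle_def)
  hence z: "norm (z - a) = r" "norm (z - b) = s" "(z - a) \<bullet> (z - b) = 0"
    by (auto simp: dist_norm norm_minus_commute)
  have "a - b = (z - b) - (z - a)" by simp
  hence "(norm (a - b))^2 = (norm (z-b))^2 + (norm (z-a))^2 - 2 * ((z - a) \<bullet> (z - b))"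
    using dot_norm_neg[of "z - a" "z - b"] by (simp add: norm_minus_commute)
  thus "(norm (a - b))^2 = r^2 + s^2" using z by simp
next
  assume "(norm (a - b))^2 = r^2 + s^2"
  from exists_orth[OF r s this] show "circles_orthogonal a r b s"
    using r s by (auto simp: circles_orthogonal_def circle_def)
qed

theorem proposition4p34:
  fixes x y :: "real^2"
  assumes "x \<in> ball 0 1 - {0}" and "y \<in> ball 0 1 - {0}"
    and "\<not> collinear {0, x, y}"
  defines "t\<^sub>x \<equiv> sqrt (1 / (norm x)^2 - 1)"
    and "t\<^sub>y \<equiv> sqrt (1 / (norm y)^2 - 1)"
  shows "circles_orthogonal (inv_pt x) t\<^sub>x (inv_pt y) t\<^sub>y
         \<longleftrightarrow> cos (angle0 x y) = norm x * norm y"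
proof -
  have x0: "norm x > 0" "norm x < 1" and y0: "norm y > 0" "norm y < 1" using assms(1,2) by auto
  have x2: "(norm x)^2 < 1" using power_strict_mono[of "norm x" 1 2] x0 by simp
  have y2: "(norm y)^2 < 1" using power_strict_mono[of "norm y" 1 2] y0 by simp
  have x2p: "(norm x)^2 > 0" and y2p: "(norm y)^2 > 0" using x0 y0 by auto
  have gx: "1 / (norm x)^2 - 1 > 0" using x2 x2p by (simp add: less_divide_eq)
  have gy: "1 / (norm y)^2 - 1 > 0" using y2 y2p by (simp add: less_divide_eq)
  have tx: "t\<^sub>x > 0" "t\<^sub>x^2 = 1 / (norm x)^2 - 1" using gx by (simp_all add: t\<^sub>x_def)
  have ty: "t\<^sub>y > 0" "t\<^sub>y^2 = 1 / (norm y)^2 - 1" using gy by (simp_all add: t\<^sub>y_def)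
  have N0: "(norm (inv_pt x - inv_pt y))^2 = (norm (inv_pt x))^2 + (norm (inv_pt y))^2 - 2 * (inv_pt x \<bullet> inv_pt y)"
  proof -
    have "2 * (inv_pt x \<bullet> inv_pt y) = (norm (inv_pt x))^2 + (norm (inv_pt y))^2 - (norm (inv_pt x - inv_pt y))^2"
      by (subst dot_norm_neg) simp
    thus ?thesis by linarith
  qed
  have I1: "(norm (inv_pt x))^2 = 1 / (norm x)^2" using x0
    by (simp add: inv_pt_def power2_eq_square)
  have I2: "(norm (inv_pt y))^2 = 1 / (norm y)^2" using y0
    by (simp add: inv_pt_def power2_eq_square)
  define Q where "Q = (x \<bullet> y) / ((norm x)^2 * (norm y)^2)"
  have I3: "inv_pt x \<bullet> inv_pt y = Q"
    by (simp add: inv_pt_def Q_def)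
  have N: "(norm (inv_pt x - inv_pt y))^2 = 1 / (norm x)^2 + 1 / (norm y)^2 - 2 * Q"
    using N0 I1 I2 I3 by simp
  define P where "P = norm x * norm y"
  have P: "P > 0" using x0 y0 by (simp add: P_def)
  have cs0: "\<bar>x \<bullet> y\<bar> \<le> P" using Cauchy_Schwarz_ineq2[of x y] by (simp add: P_def)
  have cs: "\<bar>(x \<bullet> y) / P\<bar> \<le> 1"
    using cs0 P by (simp add: abs_divide pos_divide_le_eq)
  have c: "cos (angle0 x y) = (x \<bullet> y) / P"
    unfolding angle0_def P_def[symmetric] using cs by (simp add: cos_arccos_abs)
  have "circles_orthogonal (inv_pt x) t\<^sub>x (inv_pt y) t\<^sub>y \<longleftrightarrow>
        1 / (norm x)^2 + 1 / (norm y)^2 - 2 * Q = (1 / (norm x)^2 - 1) + (1 / (norm y)^2 - 1)"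
    using orth_iff[OF tx(1) ty(1)] N tx(2) ty(2) by simp
  also have "\<dots> \<longleftrightarrow> Q = 1" by linarith
  also have "\<dots> \<longleftrightarrow> x \<bullet> y = P * P"
  proof -
    have "(norm x)^2 * (norm y)^2 = P * P" by (simp add: P_def power2_eq_square algebra_simps)
    thus ?thesis using P by (auto simp add: Q_def)
  qed
  also have "\<dots> \<longleftrightarrow> (x \<bullet> y) / P = P"
    using P by (simp add: divide_eq_eq)
  finally show ?thesis using c by (simp add: P_def)
qed

end
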